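(* If $\Gamma\vdash t:A$ is derivable in the simply typed distributive $\lambda$-calculus and $\theta$ is a substitution valid with respect to $\Gamma$, then $\theta t\in[\![A]\!]$.
   Context: Terms: $t,s,u ::= x \mid \lambda x.t \mid ts \mid \langle t,s\rangle \mid \pi_1 t \mid \pi_2 t$ (up to $\alpha$-renaming); $t\{x:=s\}$ is capture-avoiding substitution, and for a substitution $\theta$ (a map from variables to terms), $\theta t$ is the simultaneous capture-avoiding substitution. Top-level rules: $(\lambda x.t)s \mapsto t\{x:=s\}$; $\pi_i\langle t_1,t_2\rangle \mapsto t_i$ ($i=1,2$); $\langle t,s\rangle u \mapsto \langle tu, su\rangle$; $\pi_i(\lambda x.t)\mapsto \lambda x.\pi_i t$ ($i=1,2$); $\to_{\mathsf{dist}}$ is the closure of these rules under all term constructors; $\mathrm{SN}$ is the set of strongly normalizing terms. Types: $A ::= \tau \mid A\Rightarrow A \mid A\wedge A$ with $\tau$ a single atomic type. The relation $\equiv$ on types is the smallest equivalence relation containing $A\Rightarrow (B\wedge C)\equiv (A\Rightarrow B)\wedge(A\Rightarrow C)$ and closed under congruence for $\Rightarrow$ and $\wedge$. Typing rules: $\Gamma,x:A\vdash x:A$; if $\Gamma\vdash t:A$ and $A\equiv B$ then $\Gamma\vdash t:B$; if $\Gamma,x:A\vdash t:B$ then $\Gamma\vdash \lambda x.t:A\Rightarrow B$; if $\Gamma\vdash t:A\Rightarrow B$ and $\Gamma\vdash s:A$ then $\Gamma\vdash ts:B$; if $\Gamma\vdash t:A$ and $\Gamma\vdash s:B$ then $\Gamma\vdash\langle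 t,s\rangle:A\wedge B$; if $\Gamma\vdash t:A\wedge B$ then $\Gamma\vdash\pi_1 t:A$ and $\Gamma\vdash \pi_2 t:B$. Interpretation: $[\![\tau]\!]=\mathrm{SN}$; $[\![A\Rightarrow B]\!]=\{t\mid \forall s\in[\![A]\!],\ ts\in[\![B]\!]\}$; $[\![A\wedge B]\!]=\{t\mid \pi_1t\in[\![A]\!]\text{ and }\pi_2 t\in[\![B]\!]\}$. A substitution $\theta$ is valid with respect to $\Gamma$ if $\theta x\in[\![A]\!]$ for every $x:A\in\Gamma$. *)

theory Defs
  imports Main
begin

text \<open>Terms of the distributive lambda-calculus, with de Bruijn indices
  (so terms are identified up to alpha-renaming).\<close>
datatype dterm = Var nat | Lam dterm | App dterm dterm
  | Pair dterm dterm | Proj1 dterm | Proj2 dterm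

fun lift :: "dterm \<Rightarrow> nat \<Rightarrow> dterm" where
  "lift (Var i) k = (if i < k then Var i else Var (Suc i))"
| "lift (Lam t) k = Lam (lift t (Suc k))"
| "lift (App t s) k = App (lift t k) (lift s k)"
| "lift (Pair t s) k = Pair (lift t k) (lift s k)"
| "lift (Proj1 t) k = Proj1 (lift t k)"
| "lift (Proj2 t) k = Proj2 (lift t k)"

fun subst :: "dterm \<Rightarrow> dterm \<Rightarrow> nat \<Rightarrow> dterm" where
  "subst (Var i) s k = (if k < i then Var (i - 1) else if i = k then s else Var i)"
| "subst (Lam t) s k = Lam (subst t (lift s 0) (Suc k))"
| "subst (App t u) s k = App (subst t s k) (subst u s k)"
| "subst (Pair t u) s k = Pair (subst t s k) (subst u s k)"
| "subst (Proj1 t) s k = Proj1 (subst t s k)"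
| "subst (Proj2 t) s k = Proj2 (subst t s k)"

fun substs :: "(nat \<Rightarrow> dterm) \<Rightarrow> dterm \<Rightarrow> dterm" where
  "substs \<theta> (Var i) = \<theta> i"
| "substs \<theta> (Lam t) = Lam (substs (\<lambda>i. case i of 0 \<Rightarrow> Var 0 | Suc j \<Rightarrow> lift (\<theta> j) 0) t)"
| "substs \<theta> (App t s) = App (substs \<theta> t) (substs \<theta> s)"
| "substs \<theta> (Pair t s) = Pair (substs \<theta> t) (substs \<theta> s)"
| "substs \<theta> (Proj1 t) = Proj1 (substs \<theta> t)"
| "substs \<theta> (Proj2 t) = Proj2 (substs \<theta> t)"

inductive dist :: "dterm \<Rightarrow> dterm \<Rightarrow> bool" (infix "\<rightarrow>\<^sub>d" 50) where
  beta: "App (Lam t) s \<rightarrow>\<^sub>d subst t s 0"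
| proj1: "Proj1 (Pair t s) \<rightarrow>\<^sub>d t"
| proj2: "Proj2 (Pair t s) \<rightarrow>\<^sub>d s"
| app_pair: "App (Pair t s) u \<rightarrow>\<^sub>d Pair (App t u) (App s u)"
| proj1_lam: "Proj1 (Lam t) \<rightarrow>\<^sub>d Lam (Proj1 t)"
| proj2_lam: "Proj2 (Lam t) \<rightarrow>\<^sub>d Lam (Proj2 t)"
| lam: "t \<rightarrow>\<^sub>d t' \<Longrightarrow> Lam t \<rightarrow>\<^sub>d Lam t'"
| appL: "t \<rightarrow>\<^sub>d t' \<Longrightarrow> App t s \<rightarrow>\<^sub>d App t' s"
| appR: "s \<rightarrow>\<^sub>d s' \<Longrightarrow> App t s \<rightarrow>\<^sub>d App t s'"
| pairL: "t \<rightarrow>\<^sub>d t' \<Longrightarrow> Pair t s \<rightarrow>\<^sub>d Pair t' s"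
| pairR: "s \<rightarrow>\<^sub>d s' \<Longrightarrow> Pair t s \<rightarrow>\<^sub>d Pair t s'"
| proj1c: "t \<rightarrow>\<^sub>d t' \<Longrightarrow> Proj1 t \<rightarrow>\<^sub>d Proj1 t'"
| proj2c: "t \<rightarrow>\<^sub>d t' \<Longrightarrow> Proj2 t \<rightarrow>\<^sub>d Proj2 t'"

definition SN :: "dterm set" where
  "SN = Wellfounded.acc {(s, t). t \<rightarrow>\<^sub>d s}"

datatype ty = Tau | Arr ty ty | And ty ty

inductive teq :: "ty \<Rightarrow> ty \<Rightarrow> bool" where
  dist_ax: "teq (Arr A (And B C)) (And (Arr A B) (Arr A C))"
| refl: "teq A A"
| sym: "teq A B \<Longrightarrow> teq B A"
| trans: "teq A B \<Longrightarrow> teq B C \<Longrightarrow> teq A C"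
| cong_arr: "teq A A' \<Longrightarrow> teq B B' \<Longrightarrow> teq (Arr A B) (Arr A' B')"
| cong_and: "teq A A' \<Longrightarrow> teq B B' \<Longrightarrow> teq (And A B) (And A' B')"

text \<open>Typing; contexts are lists, index i refers to the i-th entry (innermost first).\<close>
inductive typing :: "ty list \<Rightarrow> dterm \<Rightarrow> ty \<Rightarrow> bool" where
  ax: "i < length \<Gamma> \<Longrightarrow> \<Gamma> ! i = A \<Longrightarrow> typing \<Gamma> (Var i) A"
| conv: "typing \<Gamma> t A \<Longrightarrow> teq A B \<Longrightarrow> typing \<Gamma> t B"
| abs: "typing (A # \<Gamma>) t B \<Longrightarrow> typing \<Gamma> (Lam t) (Arr A B)"
| app: "typing \<Gamma> t (Arr A B) \<Longrightarrow> typing \<Gamma> s A \<Longrightarrow> typing \<Gamma> (App t s) B"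
| pair: "typing \<Gamma> t A \<Longrightarrow> typing \<Gamma> s B \<Longrightarrow> typing \<Gamma> (Pair t s) (And A B)"
| fst: "typing \<Gamma> t (And A B) \<Longrightarrow> typing \<Gamma> (Proj1 t) A"
| snd: "typing \<Gamma> t (And A B) \<Longrightarrow> typing \<Gamma> (Proj2 t) B"

fun interp :: "ty \<Rightarrow> dterm set" where
  "interp Tau = SN"
| "interp (Arr A B) = {t. \<forall>s\<in>interp A. App t s \<in> interp B}"
| "interp (And A B) = {t. Proj1 t \<in> interp A \<and> Proj2 t \<in> interp B}"

definition valid :: "(nat \<Rightarrow> dterm) \<Rightarrow> ty list \<Rightarrow> bool" where
  "valid \<theta> \<Gamma> \<longleftrightarrow> (\<forall>i < length \<Gamma>. \<theta> i \<in> interp (\<Gamma> ! i))"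

end

theory Submission
  imports Defs
begin

declare if_not_P [simp] not_less_eq [simp]

lemma lift_lift:
    "i < k + 1 \<Longrightarrow> lift (lift t i) (Suc k) = lift (lift t k) i"
  by (induct t arbitrary: i k) auto

lemma lift_subst [simp]:
    "j < i + 1 \<Longrightarrow> lift (subst t s j) i = subst (lift t (i + 1)) (lift s i) j"
  by (induct t arbitrary: i j s)
    (simp_all add: diff_Suc lift_lift split: nat.split)

lemma lift_subst_lt:
    "i < j + 1 \<Longrightarrow> lift (subst t s j) i = subst (lift t i) (lift s i) (j + 1)"
  by (induct t arbitrary: i j s) (simp_all add: lift_lift)

lemma subst_lift [simp]:
    "subst (lift t k) s k = t"
  by (induct t arbitrary: k s) simp_all

lemma subst_subst:
    "i < j + 1 \<Longrightarrow> subst (subst t (lift v i) (Suc j)) (subst u v j) i = subst (subst t u i) v j"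
  by (induct t arbitrary: i j u v)
    (simp_all add: diff_Suc lift_lift [symmetric] lift_subst_lt
      split: nat.split)

lemma subst_substs:
  "subst (substs \<theta> t) s k = substs (\<lambda>i. subst (\<theta> i) s k) t"
proof (induct t arbitrary: \<theta> s k)
  case (Lam t)
  have "(\<lambda>i. subst (case i of 0 \<Rightarrow> Var 0 | Suc j \<Rightarrow> lift (\<theta> j) 0) (lift s 0) (Suc k))
      = (\<lambda>i. case i of 0 \<Rightarrow> Var 0 | Suc j \<Rightarrow> lift (subst (\<theta> j) s k) 0)"
    by (rule ext) (simp add: lift_subst_lt split: nat.split)
  then show ?case using Lam by simp
qed simp_all

lemma subst_substs_up:
  "subst (substs (\<lambda>i. case i of 0 \<Rightarrow> Var 0 | Suc j \<Rightarrow> lift (\<theta> j) 0) t) s 0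
   = substs (\<lambda>i. case i of 0 \<Rightarrow> s | Suc j \<Rightarrow> \<theta> j) t"
proof -
  have "(\<lambda>i. subst (case i of 0 \<Rightarrow> Var 0 | Suc j \<Rightarrow> lift (\<theta> j) 0) s 0)
      = (\<lambda>i. case i of 0 \<Rightarrow> s | Suc j \<Rightarrow> \<theta> j)"
    by (rule ext) (simp split: nat.split)
  then show ?thesis by (simp add: subst_substs)
qed

inductive_cases dist_cases:
  "Var i \<rightarrow>\<^sub>d u"
  "Lam t \<rightarrow>\<^sub>d u"
  "App t s \<rightarrow>\<^sub>d u"
  "Pair t s \<rightarrow>\<^sub>d u"
  "Proj1 t \<rightarrow>\<^sub>d u"
  "Proj2 t \<rightarrow>\<^sub>d u"

declare dist.intros [intro]

abbreviation reds :: "dterm \<Rightarrow> dterm \<Rightarrow> bool" where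
  "reds \<equiv> dist\<^sup>*\<^sup>*"

lemma lift_red: "t \<rightarrow>\<^sub>d t' \<Longrightarrow> lift t k \<rightarrow>\<^sub>d lift t' k"
proof (induct arbitrary: k rule: dist.induct)
  case (beta t s)
  then show ?case using dist.beta[of "lift t (Suc k)" "lift s k"] by simp
qed auto

lemma subst_red: "t \<rightarrow>\<^sub>d t' \<Longrightarrow> subst t s k \<rightarrow>\<^sub>d subst t' s k"
proof (induct arbitrary: s k rule: dist.induct)
  case (beta t u)
  then show ?case
    using dist.beta[of "subst t (lift s 0) (Suc k)" "subst u s k"]
    by (simp add: subst_subst[of 0 k, simplified])
qed auto

lemma rtr_Lam: "reds s s' \<Longrightarrow> reds (Lam s) (Lam s')"
  by (induct set: rtranclp) (blast intro: rtranclp.rtrancl_into_rtrancl)+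
lemma rtr_AppL: "reds s s' \<Longrightarrow> reds (App s t) (App s' t)"
  by (induct set: rtranclp) (blast intro: rtranclp.rtrancl_into_rtrancl)+
lemma rtr_AppR: "reds s s' \<Longrightarrow> reds (App t s) (App t s')"
  by (induct set: rtranclp) (blast intro: rtranclp.rtrancl_into_rtrancl)+
lemma rtr_PairL: "reds s s' \<Longrightarrow> reds (Pair s t) (Pair s' t)"
  by (induct set: rtranclp) (blast intro: rtranclp.rtrancl_into_rtrancl)+
lemma rtr_PairR: "reds s s' \<Longrightarrow> reds (Pair t s) (Pair t s')"
  by (induct set: rtranclp) (blast intro: rtranclp.rtrancl_into_rtrancl)+
lemma rtr_Proj1: "reds s s' \<Longrightarrow> reds (Proj1 s) (Proj1 s')"
  by (induct set: rtranclp) (blast intro: rtranclp.rtrancl_into_rtrancl)+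
lemma rtr_Proj2: "reds s s' \<Longrightarrow> reds (Proj2 s) (Proj2 s')"
  by (induct set: rtranclp) (blast intro: rtranclp.rtrancl_into_rtrancl)+

lemma subst_red2: "s \<rightarrow>\<^sub>d s' \<Longrightarrow> reds (subst t s k) (subst t s' k)"
proof (induct t arbitrary: s s' k)
  case (Var i)
  then show ?case by auto
next
  case (Lam t)
  then show ?case by (simp add: rtr_Lam lift_red)
next
  case (App t u)
  then show ?case by (simp add: rtr_AppL rtr_AppR rtranclp_trans[OF rtr_AppL rtr_AppR])
next
  case (Pair t u)
  then show ?case by (simp add: rtranclp_trans[OF rtr_PairL rtr_PairR])
qed (simp_all add: rtr_Proj1 rtr_Proj2)


lemma SN_intro: "(\<And>t'. t \<rightarrow>\<^sub>d t' \<Longrightarrow> t' \<in> SN) \<Longrightarrow> t \<in> SN"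
  unfolding SN_def by (rule acc.intros) auto

lemma SN_step: "t \<in> SN \<Longrightarrow> t \<rightarrow>\<^sub>d t' \<Longrightarrow> t' \<in> SN"
  unfolding SN_def by (erule acc_downward) simp

lemma SN_ind[consumes 1, case_names step]:
  assumes "t \<in> SN"
    and "\<And>t. t \<in> SN \<Longrightarrow> (\<And>t'. t \<rightarrow>\<^sub>d t' \<Longrightarrow> P t') \<Longrightarrow> P t"
  shows "P t"
  using assms(1) unfolding SN_def
proof (induct rule: acc.induct)
  case (accI x)
  then show ?case using assms(2)[of x] unfolding SN_def by (auto intro: acc.intros)
qed

lemma SN_preimage:
  assumes "f t \<in> SN" and "\<And>a b. a \<rightarrow>\<^sub>d b \<Longrightarrow> f a \<rightarrow>\<^sub>d f b"
  shows "t \<in> SN"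
proof -
  have "\<forall>t. u = f t \<longrightarrow> t \<in> SN" if "u \<in> SN" for u
    using that
  proof (induct rule: SN_ind)
    case (step u)
    then show ?case using assms(2) by (blast intro: SN_intro)
  qed
  then show ?thesis using assms(1) by blast
qed

definition neutral :: "dterm \<Rightarrow> bool" where
  "neutral t = (case t of Lam _ \<Rightarrow> False | Pair _ _ \<Rightarrow> False | _ \<Rightarrow> True)"

lemma neutral_simps[simp]:
  "neutral (Var i)" "\<not> neutral (Lam t)" "neutral (App t s)" "\<not> neutral (Pair t s)"
  "neutral (Proj1 t)" "neutral (Proj2 t)"
  by (simp_all add: neutral_def)

lemma Var_red: "\<not> Var i \<rightarrow>\<^sub>d u"
  by (rule notI, erule dist_cases)

lemma Lam_red: "Lam t \<rightarrow>\<^sub>d u \<longleftrightarrow> (\<exists>t'. t \<rightarrow>\<^sub>d t' \<and> u = Lam t')"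
  by (rule iffI, (erule dist_cases; auto), blast)

lemma App_red: "App t s \<rightarrow>\<^sub>d u \<longleftrightarrow>
   (\<exists>v. t = Lam v \<and> u = subst v s 0) \<or> (\<exists>a b. t = Pair a b \<and> u = Pair (App a s) (App b s))
   \<or> (\<exists>t'. t \<rightarrow>\<^sub>d t' \<and> u = App t' s) \<or> (\<exists>s'. s \<rightarrow>\<^sub>d s' \<and> u = App t s')"
  by (rule iffI, (erule dist_cases; auto), blast)

lemma Pair_red: "Pair t s \<rightarrow>\<^sub>d u \<longleftrightarrow>
   (\<exists>t'. t \<rightarrow>\<^sub>d t' \<and> u = Pair t' s) \<or> (\<exists>s'. s \<rightarrow>\<^sub>d s' \<and> u = Pair t s')"
  by (rule iffI, (erule dist_cases; auto), blast)

lemma Proj1_red: "Proj1 t \<rightarrow>\<^sub>d u \<longleftrightarrow>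
   (\<exists>a b. t = Pair a b \<and> u = a) \<or> (\<exists>v. t = Lam v \<and> u = Lam (Proj1 v))
   \<or> (\<exists>t'. t \<rightarrow>\<^sub>d t' \<and> u = Proj1 t')"
  by (rule iffI, (erule dist_cases; auto), blast)

lemma Proj2_red: "Proj2 t \<rightarrow>\<^sub>d u \<longleftrightarrow>
   (\<exists>a b. t = Pair a b \<and> u = b) \<or> (\<exists>v. t = Lam v \<and> u = Lam (Proj2 v))
   \<or> (\<exists>t'. t \<rightarrow>\<^sub>d t' \<and> u = Proj2 t')"
  by (rule iffI, (erule dist_cases; auto), blast)

lemma CR:
  "(\<forall>t. t \<in> interp A \<longrightarrow> t \<in> SN) \<and>
   (\<forall>t t'. t \<in> interp A \<longrightarrow> t \<rightarrow>\<^sub>d t' \<longrightarrow> t' \<in> interp A) \<and>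
   (\<forall>t. neutral t \<longrightarrow> (\<forall>t'. t \<rightarrow>\<^sub>d t' \<longrightarrow> t' \<in> interp A) \<longrightarrow> t \<in> interp A)"
proof (induct A)
  case Tau
  have "\<And>t t'. t \<in> SN \<Longrightarrow> t \<rightarrow>\<^sub>d t' \<Longrightarrow> t' \<in> SN" by (rule SN_step)
  moreover have "\<And>t. (\<forall>t'. t \<rightarrow>\<^sub>d t' \<longrightarrow> t' \<in> SN) \<Longrightarrow> t \<in> SN" by (rule SN_intro) blast
  ultimately show ?case unfolding interp.simps by blast
next
  case (Arr A B)
  have A1: "\<And>t. t \<in> interp A \<Longrightarrow> t \<in> SN"
   and A2: "\<And>t t'. t \<in> interp A \<Longrightarrow> t \<rightarrow>\<^sub>d t' \<Longrightarrow> t' \<in> interp A"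
   and A3: "\<And>t. neutral t \<Longrightarrow> (\<And>t'. t \<rightarrow>\<^sub>d t' \<Longrightarrow> t' \<in> interp A) \<Longrightarrow> t \<in> interp A"
    using Arr(1) by blast+
  have B1: "\<And>t. t \<in> interp B \<Longrightarrow> t \<in> SN"
   and B2: "\<And>t t'. t \<in> interp B \<Longrightarrow> t \<rightarrow>\<^sub>d t' \<Longrightarrow> t' \<in> interp B"
   and B3: "\<And>t. neutral t \<Longrightarrow> (\<And>t'. t \<rightarrow>\<^sub>d t' \<Longrightarrow> t' \<in> interp B) \<Longrightarrow> t \<in> interp B"
    using Arr(2) by blast+
  have v: "Var 0 \<in> interp A"
    by (rule A3) (simp_all add: Var_red)
  have cr1: "t \<in> SN" if "t \<in> interp (Arr A B)" for t
  proof -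
    have "App t (Var 0) \<in> SN" using that v B1 by simp
    then show ?thesis by (rule SN_preimage) (rule dist.appL)
  qed
  have cr2: "t' \<in> interp (Arr A B)" if "t \<in> interp (Arr A B)" "t \<rightarrow>\<^sub>d t'" for t t'
    using that B2 dist.appL by simp blast
  have cr3: "t \<in> interp (Arr A B)" if n: "neutral t" and h: "\<And>t'. t \<rightarrow>\<^sub>d t' \<Longrightarrow> t' \<in> interp (Arr A B)" for t
  proof -
    have "App t s \<in> interp B" if "s \<in> SN" "s \<in> interp A" for s
      using that
    proof (induct rule: SN_ind)
      case (step s)
      have hB: "u \<in> interp B" if "App t s \<rightarrow>\<^sub>d u" for u
      proof -
        have nl: "\<And>v. t \<noteq> Lam v" and np: "\<And>a b. t \<noteq> Pair a b" using n by auto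
        from that nl np consider t' where "t \<rightarrow>\<^sub>d t'" "u = App t' s"
          | s' where "s \<rightarrow>\<^sub>d s'" "u = App t s'"
          unfolding App_red by blast
        then show ?thesis
        proof cases
          case 1
          then show ?thesis using h[of t'] step(3) by simp
        next
          case 2
          then show ?thesis using step(2)[of s'] A2 step(3) by blast
        qed
      qed
      show ?case by (rule B3[OF neutral_simps(3) hB])
    qed
    then show ?thesis using A1 by simp
  qed
  show ?case using cr1 cr2 cr3 by blast
next
  case (And A B)
  have A1: "\<And>t. t \<in> interp A \<Longrightarrow> t \<in> SN"
   and A2: "\<And>t t'. t \<in> interp A \<Longrightarrow> t \<rightarrow>\<^sub>d t' \<Longrightarrow> t' \<in> interp A"
    using And(1) by blast+
  have B2: "\<And>t t'. t \<in> interp B \<Longrightarrow> t \<rightarrow>\<^sub>d t' \<Longrightarrow> t' \<in> interp B"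
    using And(2) by blast+
  have A3: "\<And>t. neutral t \<Longrightarrow> (\<And>t'. t \<rightarrow>\<^sub>d t' \<Longrightarrow> t' \<in> interp A) \<Longrightarrow> t \<in> interp A"
    using And(1) by blast
  have B3: "\<And>t. neutral t \<Longrightarrow> (\<And>t'. t \<rightarrow>\<^sub>d t' \<Longrightarrow> t' \<in> interp B) \<Longrightarrow> t \<in> interp B"
    using And(2) by blast
  have cr1: "t \<in> SN" if "t \<in> interp (And A B)" for t
  proof -
    have "Proj1 t \<in> SN" using that A1 by simp
    then show ?thesis by (rule SN_preimage) (rule dist.proj1c)
  qed
  have cr2: "t' \<in> interp (And A B)" if "t \<in> interp (And A B)" "t \<rightarrow>\<^sub>d t'" for t t'
    using that A2 B2 dist.proj1c dist.proj2c by simp blast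
  have cr3: "t \<in> interp (And A B)" if n: "neutral t" and h: "\<And>t'. t \<rightarrow>\<^sub>d t' \<Longrightarrow> t' \<in> interp (And A B)" for t
  proof -
    have nl: "\<And>v. t \<noteq> Lam v" and np: "\<And>a b. t \<noteq> Pair a b" using n by auto
    have "Proj1 t \<in> interp A"
    proof (rule A3)
      fix u assume "Proj1 t \<rightarrow>\<^sub>d u"
      then obtain t' where "t \<rightarrow>\<^sub>d t'" "u = Proj1 t'" using nl np unfolding Proj1_red by blast
      then show "u \<in> interp A" using h[of t'] by simp
    qed simp
    moreover have "Proj2 t \<in> interp B"
    proof (rule B3)
      fix u assume "Proj2 t \<rightarrow>\<^sub>d u"
      then obtain t' where "t \<rightarrow>\<^sub>d t'" "u = Proj2 t'" using nl np unfolding Proj2_red by blast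
      then show "u \<in> interp B" using h[of t'] by simp
    qed simp
    ultimately show ?thesis by simp
  qed
  show ?case using cr1 cr2 cr3 by blast
qed

lemma CR1: "t \<in> interp A \<Longrightarrow> t \<in> SN" using CR by blast
lemma CR2: "t \<in> interp A \<Longrightarrow> t \<rightarrow>\<^sub>d t' \<Longrightarrow> t' \<in> interp A" using CR by blast
lemma CR3: "neutral t \<Longrightarrow> (\<And>t'. t \<rightarrow>\<^sub>d t' \<Longrightarrow> t' \<in> interp A) \<Longrightarrow> t \<in> interp A" using CR by blast

lemma CR2s: "reds t t' \<Longrightarrow> t \<in> interp A \<Longrightarrow> t' \<in> interp A"
  by (induct rule: rtranclp_induct) (auto intro: CR2)


lemma beta_exp:
  assumes "u \<in> SN" "s \<in> SN" "subst u s 0 \<in> interp B"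
  shows "App (Lam u) s \<in> interp B"
  using assms
proof (induct u arbitrary: s rule: SN_ind)
  case (step u)
  note IHu = step(2)
  from step(3) step(4) show ?case
  proof (induct s rule: SN_ind)
    case (step s)
    have "w \<in> interp B" if "App (Lam u) s \<rightarrow>\<^sub>d w" for w
    proof -
      from that consider "w = subst u s 0"
        | t' where "Lam u \<rightarrow>\<^sub>d t'" "w = App t' s"
        | s' where "s \<rightarrow>\<^sub>d s'" "w = App (Lam u) s'"
        unfolding App_red by blast
      then show ?thesis
      proof cases
        case 1 then show ?thesis using step(3) by simp
      next
        case 2
        then obtain u' where u': "u \<rightarrow>\<^sub>d u'" "w = App (Lam u') s" unfolding Lam_red by blast
        have "subst u' s 0 \<in> interp B" using CR2[OF step(3) subst_red[OF u'(1)]] .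
        then show ?thesis using IHu[OF u'(1) step(1)] u'(2) by simp
      next
        case 3
        have "subst u s' 0 \<in> interp B" using CR2s[OF subst_red2[OF 3(1)] step(3)] .
        then show ?thesis using step(2)[OF 3(1)] 3(2) by simp
      qed
    qed
    then show ?case by (rule CR3[OF neutral_simps(3)])
  qed
qed

lemma pair_exp1:
  assumes "x \<in> interp B" "y \<in> SN"
  shows "Proj1 (Pair x y) \<in> interp B"
proof -
  have "x \<in> SN" using assms(1) by (rule CR1)
  then show ?thesis using assms
  proof (induct x arbitrary: y rule: SN_ind)
    case (step x)
    note IHx = step(2)
    from step(4) step(3) show ?case
    proof (induct y rule: SN_ind)
      case (step y)
      have "w \<in> interp B" if "Proj1 (Pair x y) \<rightarrow>\<^sub>d w" for w
      proof -
        from that consider "w = x" | p where "Pair x y \<rightarrow>\<^sub>d p" "w = Proj1 p"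
          unfolding Proj1_red by blast
        then show ?thesis
        proof cases
          case 1 then show ?thesis using step(3) by simp
        next
          case 2
          from 2(1) consider x' where "x \<rightarrow>\<^sub>d x'" "p = Pair x' y"
            | y' where "y \<rightarrow>\<^sub>d y'" "p = Pair x y'" unfolding Pair_red by blast
          then show ?thesis
          proof cases
            case 1 then show ?thesis using IHx[OF 1(1) CR2[OF step(3) 1(1)] step(1)] 2(2) by simp
          next
            case (2 y') then show ?thesis using step(2)[OF 2(1) step(3)] \<open>w = Proj1 p\<close> by simp
          qed
        qed
      qed
      then show ?case by (rule CR3[OF neutral_simps(5)])
    qed
  qed
qed

lemma pair_exp2:
  assumes "y \<in> interp B" "x \<in> SN"
  shows "Proj2 (Pair x y) \<in> interp B"
proof -
  have "y \<in> SN" using assms(1) by (rule CR1)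
  then show ?thesis using assms
  proof (induct y arbitrary: x rule: SN_ind)
    case (step y)
    note IHy = step(2)
    from step(4) step(3) show ?case
    proof (induct x rule: SN_ind)
      case (step x)
      have "w \<in> interp B" if "Proj2 (Pair x y) \<rightarrow>\<^sub>d w" for w
      proof -
        from that consider "w = y" | p where "Pair x y \<rightarrow>\<^sub>d p" "w = Proj2 p"
          unfolding Proj2_red by blast
        then show ?thesis
        proof cases
          case 1 then show ?thesis using step(3) by simp
        next
          case 2
          from 2(1) consider x' where "x \<rightarrow>\<^sub>d x'" "p = Pair x' y"
            | y' where "y \<rightarrow>\<^sub>d y'" "p = Pair x y'" unfolding Pair_red by blast
          then show ?thesis
          proof cases
            case (1 x') then show ?thesis using step(2)[OF 1(1) step(3)] \<open>w = Proj2 p\<close> by simp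
          next
            case (2 y') then show ?thesis using IHy[OF 2(1) CR2[OF step(3) 2(1)] step(1)] \<open>w = Proj2 p\<close> by simp
          qed
        qed
      qed
      then show ?case by (rule CR3[OF neutral_simps(6)])
    qed
  qed
qed

lemma P1:
  assumes "t \<in> SN" "s \<in> interp A" "\<forall>s\<in>interp A. Proj1 (App t s) \<in> interp B"
  shows "App (Proj1 t) s \<in> interp B"
  using assms
proof (induct t arbitrary: s rule: SN_ind)
  case (step t)
  note IHt = step(2)
  have sSN: "s \<in> SN" using step(3) by (rule CR1)
  from sSN step(3) step(4) show ?case
  proof (induct s rule: SN_ind)
    case (step s)
    have "w \<in> interp B" if "App (Proj1 t) s \<rightarrow>\<^sub>d w" for w
    proof -
      from that consider q where "Proj1 t \<rightarrow>\<^sub>d q" "w = App q s"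
        | s' where "s \<rightarrow>\<^sub>d s'" "w = App (Proj1 t) s'"
        unfolding App_red by blast
      then show ?thesis
      proof cases
        case (1 q)
        from 1(1) consider a b where "t = Pair a b" "q = a"
          | v where "t = Lam v" "q = Lam (Proj1 v)"
          | t' where "t \<rightarrow>\<^sub>d t'" "q = Proj1 t'"
          unfolding Proj1_red by blast
        then show ?thesis
        proof cases
          case (1 a b)
          have "Proj1 (App t s) \<in> interp B" using step(3) step(4) by blast
          moreover have "reds (Proj1 (App t s)) (App a s)"
            using 1 by (blast intro: rtranclp.rtrancl_into_rtrancl)
          ultimately show ?thesis using CR2s \<open>w = App q s\<close> 1 by blast
        next
          case (2 v)
          have X: "Proj1 (App t s) \<in> interp B" using step(3) step(4) by blast
          have "Proj1 (App t s) \<rightarrow>\<^sub>d Proj1 (subst v s 0)" using 2 by blast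
          then have Y: "subst (Proj1 v) s 0 \<in> interp B" using CR2[OF X] by simp
          have "Proj1 v \<in> SN" using CR1[OF Y] by (rule SN_preimage) (rule subst_red)
          then have "App (Lam (Proj1 v)) s \<in> interp B"
            using beta_exp step(1) Y by blast
          then show ?thesis using 2 \<open>w = App q s\<close> by simp
        next
          case (3 t')
          have "\<forall>s\<in>interp A. Proj1 (App t' s) \<in> interp B"
            using step(4) 3(1) CR2 by blast
          then show ?thesis using IHt[OF 3(1) step(3)] 3(2) \<open>w = App q s\<close> by simp
        qed
      next
        case (2 s')
        then show ?thesis using step(2)[OF 2(1) CR2[OF step(3) 2(1)] step(4)] by simp
      qed
    qed
    then show ?case by (rule CR3[OF neutral_simps(3)])
  qed
qed

lemma P2:
  assumes "t \<in> SN" "s \<in> interp A" "\<forall>s\<in>interp A. Proj2 (App t s) \<in> interp C"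
  shows "App (Proj2 t) s \<in> interp C"
  using assms
proof (induct t arbitrary: s rule: SN_ind)
  case (step t)
  note IHt = step(2)
  have sSN: "s \<in> SN" using step(3) by (rule CR1)
  from sSN step(3) step(4) show ?case
  proof (induct s rule: SN_ind)
    case (step s)
    have "w \<in> interp C" if "App (Proj2 t) s \<rightarrow>\<^sub>d w" for w
    proof -
      from that consider q where "Proj2 t \<rightarrow>\<^sub>d q" "w = App q s"
        | s' where "s \<rightarrow>\<^sub>d s'" "w = App (Proj2 t) s'"
        unfolding App_red by blast
      then show ?thesis
      proof cases
        case (1 q)
        from 1(1) consider a b where "t = Pair a b" "q = b"
          | v where "t = Lam v" "q = Lam (Proj2 v)"
          | t' where "t \<rightarrow>\<^sub>d t'" "q = Proj2 t'"
          unfolding Proj2_red by blast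
        then show ?thesis
        proof cases
          case (1 a b)
          have "Proj2 (App t s) \<in> interp C" using step(3) step(4) by blast
          moreover have "reds (Proj2 (App t s)) (App b s)"
            using 1 by (blast intro: rtranclp.rtrancl_into_rtrancl)
          ultimately show ?thesis using CR2s \<open>w = App q s\<close> 1 by blast
        next
          case (2 v)
          have X: "Proj2 (App t s) \<in> interp C" using step(3) step(4) by blast
          have "Proj2 (App t s) \<rightarrow>\<^sub>d Proj2 (subst v s 0)" using 2 by blast
          then have Y: "subst (Proj2 v) s 0 \<in> interp C" using CR2[OF X] by simp
          have "Proj2 v \<in> SN" using CR1[OF Y] by (rule SN_preimage) (rule subst_red)
          then have "App (Lam (Proj2 v)) s \<in> interp C"
            using beta_exp step(1) Y by blast
          then show ?thesis using 2 \<open>w = App q s\<close> by simp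
        next
          case (3 t')
          have "\<forall>s\<in>interp A. Proj2 (App t' s) \<in> interp C"
            using step(4) 3(1) CR2 by blast
          then show ?thesis using IHt[OF 3(1) step(3)] 3(2) \<open>w = App q s\<close> by simp
        qed
      next
        case (2 s')
        then show ?thesis using step(2)[OF 2(1) CR2[OF step(3) 2(1)] step(4)] by simp
      qed
    qed
    then show ?case by (rule CR3[OF neutral_simps(3)])
  qed
qed

lemma Q1:
  assumes "t \<in> SN" "s \<in> interp A"
    "\<forall>s\<in>interp A. App (Proj1 t) s \<in> interp B \<and> App (Proj2 t) s \<in> interp C"
  shows "Proj1 (App t s) \<in> interp B"
  using assms
proof (induct t arbitrary: s rule: SN_ind)
  case (step t)
  note IHt = step(2)
  have sSN: "s \<in> SN" using step(3) by (rule CR1)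
  from sSN step(3) step(4) show ?case
  proof (induct s rule: SN_ind)
    case (step s)
    have "w \<in> interp B" if "Proj1 (App t s) \<rightarrow>\<^sub>d w" for w
    proof -
      from that obtain p where p: "App t s \<rightarrow>\<^sub>d p" "w = Proj1 p"
        unfolding Proj1_red by blast
      from p(1) consider v where "t = Lam v" "p = subst v s 0"
        | a b where "t = Pair a b" "p = Pair (App a s) (App b s)"
        | t' where "t \<rightarrow>\<^sub>d t'" "p = App t' s"
        | s' where "s \<rightarrow>\<^sub>d s'" "p = App t s'"
        unfolding App_red by blast
      then show ?thesis
      proof cases
        case (1 v)
        have X: "App (Proj1 t) s \<in> interp B" using step(3) step(4) by blast
        have "reds (App (Proj1 t) s) (subst (Proj1 v) s 0)"
          using 1 by (blast intro: rtranclp.rtrancl_into_rtrancl)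
        then show ?thesis using CR2s[OF _ X] 1 p(2) by simp
      next
        case (2 a b)
        have X: "App (Proj1 t) s \<in> interp B" "App (Proj2 t) s \<in> interp C"
          using step(3) step(4) by blast+
        have "App a s \<in> interp B" using CR2[OF X(1)] 2 by blast
        moreover have "App b s \<in> interp C" using CR2[OF X(2)] 2 by blast
        then have "App b s \<in> SN" by (rule CR1)
        ultimately show ?thesis using pair_exp1 2 p(2) by simp
      next
        case (3 t')
        have "\<forall>s\<in>interp A. App (Proj1 t') s \<in> interp B \<and> App (Proj2 t') s \<in> interp C"
          using step(4) 3(1) CR2 by blast
        then show ?thesis using IHt[OF 3(1) step(3)] 3(2) p(2) by simp
      next
        case (4 s')
        then show ?thesis using step(2)[OF 4(1) CR2[OF step(3) 4(1)] step(4)] p(2) by simp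
      qed
    qed
    then show ?case by (rule CR3[OF neutral_simps(5)])
  qed
qed

lemma Q2:
  assumes "t \<in> SN" "s \<in> interp A"
    "\<forall>s\<in>interp A. App (Proj1 t) s \<in> interp B \<and> App (Proj2 t) s \<in> interp C"
  shows "Proj2 (App t s) \<in> interp C"
  using assms
proof (induct t arbitrary: s rule: SN_ind)
  case (step t)
  note IHt = step(2)
  have sSN: "s \<in> SN" using step(3) by (rule CR1)
  from sSN step(3) step(4) show ?case
  proof (induct s rule: SN_ind)
    case (step s)
    have "w \<in> interp C" if "Proj2 (App t s) \<rightarrow>\<^sub>d w" for w
    proof -
      from that obtain p where p: "App t s \<rightarrow>\<^sub>d p" "w = Proj2 p"
        unfolding Proj2_red by blast
      from p(1) consider v where "t = Lam v" "p = subst v s 0"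
        | a b where "t = Pair a b" "p = Pair (App a s) (App b s)"
        | t' where "t \<rightarrow>\<^sub>d t'" "p = App t' s"
        | s' where "s \<rightarrow>\<^sub>d s'" "p = App t s'"
        unfolding App_red by blast
      then show ?thesis
      proof cases
        case (1 v)
        have X: "App (Proj2 t) s \<in> interp C" using step(3) step(4) by blast
        have "reds (App (Proj2 t) s) (subst (Proj2 v) s 0)"
          using 1 by (blast intro: rtranclp.rtrancl_into_rtrancl)
        then show ?thesis using CR2s[OF _ X] 1 p(2) by simp
      next
        case (2 a b)
        have X: "App (Proj1 t) s \<in> interp B" "App (Proj2 t) s \<in> interp C"
          using step(3) step(4) by blast+
        have "App b s \<in> interp C" using CR2[OF X(2)] 2 by blast
        moreover have "App a s \<in> interp B" using CR2[OF X(1)] 2 by blast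
        then have "App a s \<in> SN" by (rule CR1)
        ultimately show ?thesis using pair_exp2 2 p(2) by simp
      next
        case (3 t')
        have "\<forall>s\<in>interp A. App (Proj1 t') s \<in> interp B \<and> App (Proj2 t') s \<in> interp C"
          using step(4) 3(1) CR2 by blast
        then show ?thesis using IHt[OF 3(1) step(3)] 3(2) p(2) by simp
      next
        case (4 s')
        then show ?thesis using step(2)[OF 4(1) CR2[OF step(3) 4(1)] step(4)] p(2) by simp
      qed
    qed
    then show ?case by (rule CR3[OF neutral_simps(6)])
  qed
qed


lemma teq_interp: "teq A B \<Longrightarrow> interp A = interp B"
proof (induct rule: teq.induct)
  case (dist_ax A B C)
  show ?case
  proof (rule set_eqI, rule iffI)
    fix t assume t: "t \<in> interp (Arr A (And B C))"
    have tSN: "t \<in> SN" using t by (rule CR1)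
    have h1: "\<forall>s\<in>interp A. Proj1 (App t s) \<in> interp B" using t by simp
    have h2: "\<forall>s\<in>interp A. Proj2 (App t s) \<in> interp C" using t by simp
    show "t \<in> interp (And (Arr A B) (Arr A C))"
      using P1[OF tSN _ h1] P2[OF tSN _ h2] by simp
  next
    fix t assume t: "t \<in> interp (And (Arr A B) (Arr A C))"
    have tSN: "t \<in> SN" using t by (rule CR1)
    have h: "\<forall>s\<in>interp A. App (Proj1 t) s \<in> interp B \<and> App (Proj2 t) s \<in> interp C"
      using t by simp
    show "t \<in> interp (Arr A (And B C))"
      using Q1[OF tSN _ h] Q2[OF tSN _ h] by simp
  qed
qed simp_all

theorem lemma8:
  assumes "typing \<Gamma> t A"
    and "valid \<theta> \<Gamma>"
  shows "substs \<theta> t \<in> interp A"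
  using assms
proof (induct arbitrary: \<theta> rule: typing.induct)
  case (ax i \<Gamma> A)
  then show ?case unfolding valid_def by auto
next
  case (conv \<Gamma> t A B)
  then show ?case using teq_interp by blast
next
  case (abs A \<Gamma> t B)
  show ?case
  proof (simp, intro ballI)
    fix s assume s: "s \<in> interp A"
    define \<theta>s where "\<theta>s = (\<lambda>i. case i of 0 \<Rightarrow> s | Suc j \<Rightarrow> \<theta> j)"
    have "valid \<theta>s (A # \<Gamma>)"
      using abs(3) s unfolding valid_def \<theta>s_def by (auto split: nat.split simp: less_Suc_eq_0_disj)
    then have X: "substs \<theta>s t \<in> interp B" using abs(2) by blast
    let ?u = "substs (\<lambda>i. case i of 0 \<Rightarrow> Var 0 | Suc j \<Rightarrow> lift (\<theta> j) 0) t"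
    have Y: "subst ?u s 0 \<in> interp B" using X unfolding \<theta>s_def subst_substs_up .
    have "?u \<in> SN" using CR1[OF Y] by (rule SN_preimage) (rule subst_red)
    then show "App (Lam ?u) s \<in> interp B" using beta_exp CR1[OF s] Y by blast
  qed
next
  case (app \<Gamma> t A B s)
  then show ?case by simp
next
  case (pair \<Gamma> t A s B)
  have a: "substs \<theta> t \<in> interp A" and b: "substs \<theta> s \<in> interp B"
    using pair by blast+
  show ?case using pair_exp1[OF a CR1[OF b]] pair_exp2[OF b CR1[OF a]] by simp
next
  case (fst \<Gamma> t A B)
  then show ?case by simp
next
  case (snd \<Gamma> t A B)
  then show ?case by simp
qed

end
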